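(* Let $(X,\pi)$ be a finite symmetric two-player game with relative payoff game $(X,\Delta)$. If $X$ is a totally ordered set and $\Delta$ has increasing differences, or has decreasing differences, or is a valuation, then imitation is essentially unbeatable.
   Context: $\pi(x,y)$ is the payoff of the player choosing $x$ against $y$. Relative payoff: $\Delta(x,y)=\pi(x,y)-\pi(y,x)$. For totally ordered $X$, $\Delta$ has decreasing (resp. increasing) differences if for all $x''>x'$ and $y''>y'$ in $X$, $\Delta(x'',y'')-\Delta(x',y'')\le$ (resp. $\ge$) $\Delta(x'',y')-\Delta(x',y')$; $\Delta$ is a valuation if it has both. Let $\hat\Delta:=\max_{x,y\in X}\Delta(x,y)$. Imitate-the-best: given initial $y_0\in X$ and any opponent sequence $(x_t)_{t\ge0}$, $y_t=x_{t-1}$ if $\Delta(x_{t-1},y_{t-1})>0$ and $y_t=y_{t-1}$ otherwise. Imitation is essentially unbeatable if for every $y_0\in X$ and every sequence $(x_t)$, $\limsup_{T\to\infty}\sum_{t=0}^T\Delta(x_t,y_t)\le\hat\Delta$. *)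

theory Defs
  imports Complex_Main "HOL-Library.Extended_Real" "HOL-Library.Liminf_Limsup"
begin

text \<open>A finite symmetric two-player game on a finite totally ordered strategy set is
  modelled by a strategy type of class finite and linorder, and a payoff function
  pi, where pi x y is the payoff of the player choosing x against y.\<close>

definition rel_payoff :: "('a \<Rightarrow> 'a \<Rightarrow> real) \<Rightarrow> 'a \<Rightarrow> 'a \<Rightarrow> real" where
  "rel_payoff \<pi> x y = \<pi> x y - \<pi> y x"

definition decreasing_differences :: "('a::linorder \<Rightarrow> 'a \<Rightarrow> real) \<Rightarrow> bool" where
  "decreasing_differences D \<longleftrightarrow>
     (\<forall>x' x'' y' y''. x'' > x' \<longrightarrow> y'' > y' \<longrightarrow>
        D x'' y'' - D x' y'' \<le> D x'' y' - D x' y')"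

definition increasing_differences :: "('a::linorder \<Rightarrow> 'a \<Rightarrow> real) \<Rightarrow> bool" where
  "increasing_differences D \<longleftrightarrow>
     (\<forall>x' x'' y' y''. x'' > x' \<longrightarrow> y'' > y' \<longrightarrow>
        D x'' y'' - D x' y'' \<ge> D x'' y' - D x' y')"

definition valuation :: "('a::linorder \<Rightarrow> 'a \<Rightarrow> real) \<Rightarrow> bool" where
  "valuation D \<longleftrightarrow> decreasing_differences D \<and> increasing_differences D"

definition max_rel_payoff :: "('a::finite \<Rightarrow> 'a \<Rightarrow> real) \<Rightarrow> real" where
  "max_rel_payoff D = Max {D x y | x y. True}"

fun imitate :: "('a \<Rightarrow> 'a \<Rightarrow> real) \<Rightarrow> 'a \<Rightarrow> (nat \<Rightarrow> 'a) \<Rightarrow> nat \<Rightarrow> 'a" where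
  "imitate D y0 x 0 = y0"
| "imitate D y0 x (Suc t) =
     (if D (x t) (imitate D y0 x t) > 0 then x t else imitate D y0 x t)"

definition essentially_unbeatable :: "('a::finite \<Rightarrow> 'a \<Rightarrow> real) \<Rightarrow> bool" where
  "essentially_unbeatable \<pi> \<longleftrightarrow>
     (\<forall>y0 (x :: nat \<Rightarrow> 'a).
        limsup (\<lambda>T. ereal (\<Sum>t\<le>T. rel_payoff \<pi> (x t) (imitate (rel_payoff \<pi>) y0 x t)))
          \<le> ereal (max_rel_payoff (rel_payoff \<pi>)))"

end

theory Submission
  imports Defs
begin

lemma rp_anti: "rel_payoff \<pi> x y = - rel_payoff \<pi> y x"
  by (simp add: rel_payoff_def)

lemma rp_const:
  fixes \<pi> :: "'a::{finite,linorder} \<Rightarrow> 'a \<Rightarrow> real"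
  assumes "increasing_differences (rel_payoff \<pi>) \<or> decreasing_differences (rel_payoff \<pi>)"
  shows "rel_payoff \<pi> x y - rel_payoff \<pi> x' y = rel_payoff \<pi> x y' - rel_payoff \<pi> x' y'"
proof -
  let ?D = "rel_payoff \<pi>"
  have both: "?D x'' y'' - ?D x' y'' \<le> ?D x'' y' - ?D x' y' \<and>
              ?D x'' y'' - ?D x' y'' \<ge> ?D x'' y' - ?D x' y'"
    if "x'' > x'" "y'' > y'" for x' x'' y' y''
  proof (cases "increasing_differences ?D")
    case True
    have "?D x'' y'' - ?D x' y'' \<ge> ?D x'' y' - ?D x' y'"
      using True that unfolding increasing_differences_def by blast
    moreover have "?D y'' x'' - ?D y' x'' \<ge> ?D y'' x' - ?D y' x'"
      using True that unfolding increasing_differences_def by blast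
    ultimately show ?thesis using rp_anti[of \<pi>] by (smt (verit))
  next
    case False
    then have T: "decreasing_differences ?D" using assms by blast
    have "?D x'' y'' - ?D x' y'' \<le> ?D x'' y' - ?D x' y'"
      using T that unfolding decreasing_differences_def by blast
    moreover have "?D y'' x'' - ?D y' x'' \<le> ?D y'' x' - ?D y' x'"
      using T that unfolding decreasing_differences_def by blast
    ultimately show ?thesis using rp_anti[of \<pi>] by (smt (verit))
  qed
  have eq: "?D x'' y'' - ?D x' y'' = ?D x'' y' - ?D x' y'" if "y'' > y'" for x' x'' y' y''
  proof -
    consider "x'' > x'" | "x'' = x'" | "x'' < x'" by fastforce
    then show ?thesis
    proof cases
      case 1 then show ?thesis using both[OF 1 that] by linarith
    next
      case 2 then show ?thesis by simp
    next
      case 3 then show ?thesis using both[OF 3 that] by linarith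
    qed
  qed
  consider "y > y'" | "y = y'" | "y < y'" by fastforce
  then show ?thesis
  proof cases
    case 1 then show ?thesis using eq[OF 1, of x' x] by linarith
  next
    case 2 then show ?thesis by simp
  next
    case 3 then show ?thesis using eq[OF 3, of x' x] by linarith
  qed
qed

theorem corollary4:
  fixes \<pi> :: "'a::{finite,linorder} \<Rightarrow> 'a \<Rightarrow> real"
  assumes "increasing_differences (rel_payoff \<pi>) \<or> decreasing_differences (rel_payoff \<pi>)
           \<or> valuation (rel_payoff \<pi>)"
  shows "essentially_unbeatable \<pi>"
proof -
  let ?D = "rel_payoff \<pi>"
  have A: "increasing_differences ?D \<or> decreasing_differences ?D"
    using assms unfolding valuation_def by blast
  obtain m :: 'a where True by blast
  define f where "f x = ?D x m" for x
  have Df: "?D x y = f x - f y" for x y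
  proof -
    have "?D x y - ?D m y = ?D x m - ?D m m" by (rule rp_const[OF A])
    moreover have "?D m m = 0" by (simp add: rel_payoff_def)
    moreover have "?D m y = - ?D y m" by (rule rp_anti)
    ultimately show ?thesis unfolding f_def by linarith
  qed
  have maxge: "?D a b \<le> max_rel_payoff ?D" for a b
  proof -
    have "{?D x y | x y. True} = (\<lambda>(x,y). ?D x y) ` UNIV" by auto
    then have "finite {?D x y | x y. True}" by simp
    then show ?thesis unfolding max_rel_payoff_def by (rule Max_ge) auto
  qed
  show ?thesis unfolding essentially_unbeatable_def
  proof (intro allI)
    fix y0 and x :: "nat \<Rightarrow> 'a"
    let ?y = "imitate ?D y0 x"
    have step: "?D (x t) (?y t) \<le> f (?y (Suc t)) - f (?y t)" for t
      using Df[of "x t" "?y t"] by auto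
    have S: "(\<Sum>t\<le>T. ?D (x t) (?y t)) \<le> f (?y (Suc T)) - f y0" for T
    proof (induction T)
      case 0 then show ?case using step[of 0] by simp
    next
      case (Suc T) then show ?case using step[of "Suc T"] by simp
    qed
    have "(\<Sum>t\<le>T. ?D (x t) (?y t)) \<le> max_rel_payoff ?D" for T
      using S[of T] Df[of "?y (Suc T)" y0] maxge[of "?y (Suc T)" y0] by linarith
    then show "limsup (\<lambda>T. ereal (\<Sum>t\<le>T. ?D (x t) (?y t))) \<le> ereal (max_rel_payoff ?D)"
      by (intro Limsup_bounded) auto
  qed
qed

end
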